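(* Let $\mathcal{D}=(\Omega,\mathcal{B})$ be a supersimple $2$-$(n,4,\lambda)$ design satisfying property $(\triangle)$, such that $(\Omega,\mathcal{C})$ is a regular two-graph where $\mathcal{C}$ is the set of collinear triples, and let $\infty\in\Omega$. Let $x,y,z\in\Omega$ be pairwise distinct. Then: (a) the order of $[x,y]\cdot[y,z]$ is $2$ if $x\in\overline{y,z}$, and $3$ if $x\notin\overline{y,z}$; (b) if $x\notin\overline{y,z}$ then $[z,x,y,z]=[x,y]$; (c) $\mathcal{L}(\mathcal{D})=\mathcal{L}_\infty(\mathcal{D})$ is a group of automorphisms of $\mathcal{D}$.
   Context: A $2$-$(n,4,\lambda)$ design $(\Omega,\mathcal{B})$: $n$ points, a multiset of $4$-subsets (lines), every $2$-subset in exactly $\lambda$ lines; supersimple: distinct lines meet in at most two points. For distinct $a,b$ with lines $\{a,b,a_i,b_i\}$ through them, $[a,b]:=(a,b)\prod_i(a_i,b_i)$; $[a,a]:=1$. Permutations act on the right, products composed left to right; $[a_0,\dots,a_k]:=[a_0,a_1]\cdots[a_{k-1},a_k]$. $\mathcal{L}(\mathcal{D})$ is the set of all move sequences; $\mathcal{L}_\infty(\mathcal{D})$ the set of move sequences starting at $\infty$. $\overline{y,z}$ is the set of points $w$ such that some line contains $y,z,w$. Property $(\triangle)$: if $B_1,B_2\in\mathcal{B}$ with $|B_1\cap B_2|=2$ then $B_1\triangle B_2\in\mathcal{B}$. Regular two-graph: $(\Omega,\mathcal{C})$ is a $2$-$(n,3,\mu)$ design with every $4$-subset containing $0,2$ or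 $4$ members of $\mathcal{C}$. *)

theory Defs
  imports "HOL-Combinatorics.Permutations"
begin

text \<open>Designs: a finite point set Omega and a set of lines (4-subsets).
  Since the design is assumed supersimple, the multiset of lines has no repeated
  members, so it is modelled as a set.\<close>

definition is_2design :: "'a set \<Rightarrow> 'a set set \<Rightarrow> nat \<Rightarrow> nat \<Rightarrow> nat \<Rightarrow> bool" where
  "is_2design Omega Bs n k lam \<longleftrightarrow>
     finite Omega \<and> card Omega = n \<and>
     (\<forall>B\<in>Bs. B \<subseteq> Omega \<and> card B = k) \<and>
     (\<forall>a\<in>Omega. \<forall>b\<in>Omega. a \<noteq> b \<longrightarrow> card {B\<in>Bs. {a, b} \<subseteq> B} = lam)"

definition supersimple :: "'a set set \<Rightarrow> bool" where
  "supersimple Bs \<longleftrightarrow> (\<forall>B1\<in>Bs. \<forall>B2\<in>Bs. B1 \<noteq> B2 \<longrightarrow> card (B1 \<inter> B2) \<le> 2)"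

definition prop_triangle :: "'a set set \<Rightarrow> bool" where
  "prop_triangle Bs \<longleftrightarrow>
     (\<forall>B1\<in>Bs. \<forall>B2\<in>Bs. card (B1 \<inter> B2) = 2 \<longrightarrow> (B1 - B2) \<union> (B2 - B1) \<in> Bs)"

definition collinear_triples :: "'a set \<Rightarrow> 'a set set \<Rightarrow> 'a set set" where
  "collinear_triples Omega Bs = {T. T \<subseteq> Omega \<and> card T = 3 \<and> (\<exists>B\<in>Bs. T \<subseteq> B)}"

definition regular_two_graph :: "'a set \<Rightarrow> 'a set set \<Rightarrow> bool" where
  "regular_two_graph Omega Cs \<longleftrightarrow>
     (\<exists>mu. is_2design Omega Cs (card Omega) 3 mu) \<and>
     (\<forall>F. F \<subseteq> Omega \<and> card F = 4 \<longrightarrow> card {T\<in>Cs. T \<subseteq> F} \<in> {0, 2, 4})"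

definition line_closure :: "'a set set \<Rightarrow> 'a \<Rightarrow> 'a \<Rightarrow> 'a set" where
  "line_closure Bs y z = {w. \<exists>B\<in>Bs. {y, z, w} \<subseteq> B}"

text \<open>The elementary move [a,b] = (a,b) prod_i (a_i,b_i), where {a,b,a_i,b_i} runs over
  the lines through a and b; [a,a] = 1.  Written out pointwise (the transpositions are
  disjoint since the design is supersimple).\<close>
definition move :: "'a set set \<Rightarrow> 'a \<Rightarrow> 'a \<Rightarrow> 'a \<Rightarrow> 'a" where
  "move Bs a b x =
     (if a = b then x
      else if x = a then b
      else if x = b then a
      else if (\<exists>B\<in>Bs. {a, b, x} \<subseteq> B)
        then (THE y. \<exists>B\<in>Bs. {a, b, x} \<subseteq> B \<and> y \<in> B \<and> y \<notin> {a, b, x})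
      else x)"

text \<open>Move sequences [a_0,...,a_k] = [a_0,a_1]...[a_{k-1},a_k]; permutations act on the right
  and products are composed left to right, so as functions g h = h o g.\<close>
fun move_seq :: "'a set set \<Rightarrow> 'a list \<Rightarrow> 'a \<Rightarrow> 'a" where
  "move_seq Bs [] = id"
| "move_seq Bs [a] = id"
| "move_seq Bs (a # b # xs) = move_seq Bs (b # xs) \<circ> move Bs a b"

definition moves_L :: "'a set \<Rightarrow> 'a set set \<Rightarrow> ('a \<Rightarrow> 'a) set" where
  "moves_L Omega Bs = {move_seq Bs (a # xs) | a xs. a \<in> Omega \<and> set xs \<subseteq> Omega}"

definition moves_L_at :: "'a set \<Rightarrow> 'a set set \<Rightarrow> 'a \<Rightarrow> ('a \<Rightarrow> 'a) set" where
  "moves_L_at Omega Bs oo = {move_seq Bs (oo # xs) | xs. set xs \<subseteq> Omega}"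

definition perm_order :: "('a \<Rightarrow> 'a) \<Rightarrow> nat" where
  "perm_order g = (LEAST k. 0 < k \<and> g ^^ k = id)"

definition is_automorphism :: "'a set \<Rightarrow> 'a set set \<Rightarrow> ('a \<Rightarrow> 'a) \<Rightarrow> bool" where
  "is_automorphism Omega Bs g \<longleftrightarrow> g permutes Omega \<and> (\<lambda>B. g ` B) ` Bs = Bs"

definition is_automorphism_group :: "'a set \<Rightarrow> 'a set set \<Rightarrow> ('a \<Rightarrow> 'a) set \<Rightarrow> bool" where
  "is_automorphism_group Omega Bs G \<longleftrightarrow>
     (\<forall>g\<in>G. is_automorphism Omega Bs g) \<and> id \<in> G \<and>
     (\<forall>g\<in>G. \<forall>h\<in>G. h \<circ> g \<in> G) \<and> (\<forall>g\<in>G. inv g \<in> G)"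

end

theory Submission
  imports Defs
begin

lemma ms_app: "move_seq Bs (a # xs @ k # ys) = move_seq Bs (k # ys) \<circ> move_seq Bs (a # xs @ [k])"
  by (induction xs arbitrary: a) (auto simp: comp_assoc)


lemma ms_app2: "move_seq Bs (xs @ [k, m]) = move Bs k m \<circ> move_seq Bs (xs @ [k])"
proof (induction Bs xs rule: move_seq.induct)
  case (3 Bs a b xs)
  have "move_seq Bs ((a # b # xs) @ [k, m]) = move_seq Bs ((b # xs) @ [k, m]) \<circ> move Bs a b" by simp
  also have "\<dots> = (move Bs k m \<circ> move_seq Bs ((b # xs) @ [k])) \<circ> move Bs a b" using 3[OF rangeI] by (simp add: o_def)
  also have "\<dots> = move Bs k m \<circ> move_seq Bs ((a # b # xs) @ [k])" by (simp add: comp_assoc)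
  finally show ?case .
qed simp_all

lemma comp_in:
  assumes "k = last (e # ys1)"
  shows "move_seq Bs (k # ys2) \<circ> move_seq Bs (e # ys1) = move_seq Bs (e # ys1 @ ys2)"
proof (cases "ys1 = []")
  case True then show ?thesis using assms by simp
next
  case False
  then obtain zs where z: "ys1 = zs @ [k]" using assms by (metis append_butlast_last_id last_ConsR)
  show ?thesis unfolding z using ms_app[of Bs e zs k ys2] by simp
qed


lemma ms_rev_gen:
  assumes inv: "\<And>a b t. move Bs a b (move Bs a b t) = t" and sym: "\<And>a b. move Bs a b = move Bs b a"
  shows "move_seq Bs (rev l) \<circ> move_seq Bs l = id"
proof (induction l rule: induct_list012)
  case 1 then show ?case by simp
next
  case (2 x) then show ?case by simp
next
  case (3 x y ys)
  have "move_seq Bs (rev (x # y # ys)) = move Bs y x \<circ> move_seq Bs (rev (y # ys))"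
    using ms_app2[of Bs "rev ys" y x] by simp
  then have "move_seq Bs (rev (x # y # ys)) \<circ> move_seq Bs (x # y # ys)
      = move Bs y x \<circ> (move_seq Bs (rev (y # ys)) \<circ> move_seq Bs (y # ys)) \<circ> move Bs x y"
    by (simp add: comp_assoc)
  also have "\<dots> = id" using 3(2) sym[of y x] inv by (auto simp: fun_eq_iff)
  finally show ?case .
qed

locale SD =
  fixes Om :: "'a set" and Bs :: "'a set set"
  assumes blk: "B \<in> Bs \<Longrightarrow> B \<subseteq> Om \<and> card B = 4"
    and ss: "supersimple Bs"
    and tri: "prop_triangle Bs"
    and par: "\<lbrakk>F \<subseteq> Om; card F = 4\<rbrakk> \<Longrightarrow> card {T \<in> collinear_triples Om Bs. T \<subseteq> F} \<in> {0,2,4}"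
begin

definition col where "col x y z \<longleftrightarrow> (\<exists>B\<in>Bs. {x,y,z} \<subseteq> B)"

lemma col_sym: "col x y z = col y x z" "col x y z = col x z y"
  by (simp_all add: col_def insert_commute)

lemma blk_fin: "B \<in> Bs \<Longrightarrow> finite B"
  using blk by (metis card.infinite zero_neq_numeral)

lemma uniq:
  assumes "B1\<in>Bs" "B2\<in>Bs" "{x,y,z} \<subseteq> B1" "{x,y,z} \<subseteq> B2" "x\<noteq>y" "y\<noteq>z" "x\<noteq>z"
  shows "B1 = B2"
proof (rule ccontr)
  assume "B1 \<noteq> B2"
  then have "card (B1 \<inter> B2) \<le> 2" using ss assms(1,2) unfolding supersimple_def by blast
  moreover have "card {x,y,z} \<le> card (B1 \<inter> B2)"
    by (rule card_mono) (use assms blk_fin in auto)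
  ultimately show False using assms by simp
qed

lemma four:
  assumes "B \<in> Bs" "{x,y,z} \<subseteq> B" "distinct [x,y,z]"
  shows "\<exists>w. B = {x,y,z,w} \<and> distinct [x,y,z,w]"
proof -
  have "card (B - {x,y,z}) = 1"
    using assms blk[OF assms(1)] by (simp add: card_Diff_subset)
  then obtain w where w: "B - {x,y,z} = {w}" by (rule card_1_singletonE)
  then have "B = {x,y,z,w}" using assms(2) by auto
  moreover have "w \<notin> {x,y,z}" using w by auto
  ultimately show ?thesis using assms(3) by auto
qed

lemma colE: "col x y z \<Longrightarrow> distinct [x,y,z] \<Longrightarrow> \<exists>w. {x,y,z,w} \<in> Bs \<and> distinct [x,y,z,w]"
  unfolding col_def using four by metis

lemma card4: "card M = 4 \<Longrightarrow> a \<in> M \<Longrightarrow> \<exists>p q r. M = {a,p,q,r} \<and> distinct [a,p,q,r]"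
proof -
  assume "card M = 4" "a \<in> M"
  then have "card (M - {a}) = 3" by simp
  then obtain p q r where pqr: "M - {a} = {p,q,r}" "p\<noteq>q" "q\<noteq>r" "p\<noteq>r" unfolding card_3_iff by blast
  have "M = insert a (M - {a})" using \<open>a\<in>M\<close> by blast
  then have "M = {a,p,q,r}" using pqr(1) by simp
  moreover have "a \<notin> {p,q,r}" using pqr(1) by blast
  ultimately show ?thesis using pqr by auto
qed

lemma trix:
  assumes "B1 \<in> Bs" "B2 \<in> Bs" "B1 = {x,y,c,d}" "B2 = {x,y,e,f}" "distinct [x,y,c,d,e,f]"
  shows "{c,d,e,f} \<in> Bs"
proof -
  have "B1 \<inter> B2 = {x,y}" using assms by auto
  then have "card (B1 \<inter> B2) = 2" using assms by simp
  then have "(B1 - B2) \<union> (B2 - B1) \<in> Bs" using tri assms(1,2) unfolding prop_triangle_def by blast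
  moreover have "(B1 - B2) \<union> (B2 - B1) = {c,d,e,f}" using assms by auto
  ultimately show ?thesis by simp
qed

lemma mv_a: "move Bs a b a = b" and mv_b: "move Bs a b b = a"
  by (auto simp: move_def)

lemma mv_id: "move Bs a a = id"
  by (auto simp: move_def)

lemma mv_sym: "move Bs a b = move Bs b a"
proof (rule ext)
  fix x
  have e: "{a,b,x} = {b,a,x}" by blast
  show "move Bs a b x = move Bs b a x" unfolding move_def e by auto
qed

lemma mv_line:
  assumes "{a,b,c,d} \<in> Bs" "distinct [a,b,c,d]"
  shows "move Bs a b c = d"
proof -
  have "(THE y. \<exists>B\<in>Bs. {a, b, c} \<subseteq> B \<and> y \<in> B \<and> y \<notin> {a, b, c}) = d"
  proof (rule the_equality)
    show "\<exists>B\<in>Bs. {a, b, c} \<subseteq> B \<and> d \<in> B \<and> d \<notin> {a, b, c}"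
      using assms by (intro bexI[of _ "{a,b,c,d}"]) auto
  next
    fix y assume "\<exists>B\<in>Bs. {a, b, c} \<subseteq> B \<and> y \<in> B \<and> y \<notin> {a, b, c}"
    then obtain B where B: "B\<in>Bs" "{a, b, c} \<subseteq> B" "y \<in> B" "y \<notin> {a, b, c}" by blast
    have "B = {a,b,c,d}" by (rule uniq[OF B(1) assms(1) B(2)]) (use assms in auto)
    then show "y = d" using B by auto
  qed
  moreover have c1: "a \<noteq> b" "c \<noteq> a" "c \<noteq> b" using assms(2) by auto
  moreover have ex: "\<exists>B\<in>Bs. {a,b,c} \<subseteq> B" using assms(1) by blast
  ultimately show ?thesis unfolding move_def by (simp only: c1 ex if_False if_True)
qed

lemma mv_fix: "x \<noteq> a \<Longrightarrow> x \<noteq> b \<Longrightarrow> \<not> col a b x \<Longrightarrow> move Bs a b x = x"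
  by (auto simp: move_def col_def)

lemma mv_col:
  assumes "col a b x" "distinct [a,b,x]"
  shows "{a,b,x,move Bs a b x} \<in> Bs \<and> distinct [a,b,x,move Bs a b x]"
proof -
  obtain w where "{a,b,x,w} \<in> Bs" "distinct [a,b,x,w]" using colE assms by blast
  then show ?thesis using mv_line by auto
qed

lemma mv_inv: "move Bs a b (move Bs a b x) = x"
proof (cases "a = b \<or> x = a \<or> x = b")
  case True then show ?thesis by (auto simp: move_def)
next
  case False
  show ?thesis
  proof (cases "col a b x")
    case True
    let ?w = "move Bs a b x"
    have "{a,b,x,?w} \<in> Bs" "distinct [a,b,x,?w]" using mv_col True False by auto
    moreover have "{a,b,x,?w} = {a,b,?w,x}" by auto
    ultimately show ?thesis using mv_line[of a b ?w x] by auto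
  next
    case f: False then show ?thesis using False mv_fix by auto
  qed
qed

lemma mv_inj: "move Bs a b x = move Bs a b y \<longleftrightarrow> x = y"
  by (metis mv_inv)

lemma mv_out: "a \<in> Om \<Longrightarrow> b \<in> Om \<Longrightarrow> x \<notin> Om \<Longrightarrow> move Bs a b x = x"
  using blk unfolding move_def by auto

lemma mv_perm: "a \<in> Om \<Longrightarrow> b \<in> Om \<Longrightarrow> move Bs a b permutes Om"
  unfolding permutes_def using mv_out mv_inv by metis

lemma sub3:
  assumes "T \<subseteq> {w,x,y,z}" "card T = 3" "distinct [w,x,y,z]"
  shows "T = {w,x,y} \<or> T = {w,x,z} \<or> T = {w,y,z} \<or> T = {x,y,z}"
proof -
  have fT: "finite T" using assms(2) card.infinite by fastforce
  show ?thesis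
  proof (cases "w \<in> T \<and> x \<in> T \<and> y \<in> T \<and> z \<in> T")
    case True then have "T = {w,x,y,z}" using assms by auto
    then show ?thesis using assms by simp
  next
    case False
    then consider "T \<subseteq> {x,y,z}" | "T \<subseteq> {w,y,z}" | "T \<subseteq> {w,x,z}" | "T \<subseteq> {w,x,y}" using assms(1) by blast
    then show ?thesis
    proof cases
      case 1 then show ?thesis using card_subset_eq[OF _ 1] assms by auto
    next
      case 2 then show ?thesis using card_subset_eq[OF _ 2] assms by auto
    next
      case 3 then show ?thesis using card_subset_eq[OF _ 3] assms by auto
    next
      case 4 then show ?thesis using card_subset_eq[OF _ 4] assms by auto
    qed
  qed
qed

lemma parity:
  assumes "distinct [w,x,y,z]" "w\<in>Om" "x\<in>Om" "y\<in>Om" "z\<in>Om"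
  shows "col w x y \<longleftrightarrow> (col w x z \<longleftrightarrow> (col w y z \<longleftrightarrow> col x y z))"
proof -
  let ?F = "{w,x,y,z}"
  let ?CT = "collinear_triples Om Bs"
  let ?As = "{{w,x,y},{w,x,z},{w,y,z},{x,y,z}}"
  have eq: "{T \<in> ?CT. T \<subseteq> ?F} = {T \<in> ?As. T \<in> ?CT}"
    using sub3[OF _ _ assms(1)] unfolding collinear_triples_def by auto
  have c: "card {T \<in> ?As. T \<in> ?CT} = (\<Sum>T\<in>?As. if T \<in> ?CT then 1 else 0)"
    by (simp add: sum.inter_filter[symmetric])
  have d: "{w,x,y} \<noteq> {w,x,z}" "{w,x,y} \<noteq> {w,y,z}" "{w,x,y} \<noteq> {x,y,z}"
     "{w,x,z} \<noteq> {w,y,z}" "{w,x,z} \<noteq> {x,y,z}" "{w,y,z} \<noteq> {x,y,z}"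
    using assms(1) by auto
  have m: "{w,x,y} \<in> ?CT \<longleftrightarrow> col w x y" "{w,x,z} \<in> ?CT \<longleftrightarrow> col w x z"
          "{w,y,z} \<in> ?CT \<longleftrightarrow> col w y z" "{x,y,z} \<in> ?CT \<longleftrightarrow> col x y z"
    using assms unfolding collinear_triples_def col_def by auto
  have "card {T \<in> ?CT. T \<subseteq> ?F} \<in> {0,2,4}"
    using par[of ?F] assms by simp
  then have "(\<Sum>T\<in>?As. if T \<in> ?CT then 1 else 0::nat) \<in> {0,2,4}" by (simp only: eq c)
  then have "(if col w x y then 1 else 0) + ((if col w x z then 1 else 0) + ((if col w y z then 1 else 0) + (if col x y z then 1 else 0))) \<in> {0,2,4::nat}"
    using d m by simp
  then show ?thesis by (cases "col w x y"; cases "col w x z"; cases "col w y z"; cases "col x y z") simp_all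
qed


lemma mv_inj_on: "inj_on (move Bs a b) A"
  by (auto simp: inj_on_def mv_inj)

lemma dist_img: "distinct xs \<Longrightarrow> distinct (map (move Bs a b) xs)"
  by (simp add: distinct_map mv_inj_on)

lemma in_Om: "{p,q,r,t} \<in> Bs \<Longrightarrow> p \<in> Om \<and> q \<in> Om \<and> r \<in> Om \<and> t \<in> Om"
  using blk by blast

context
  fixes a b
  assumes aO: "a \<in> Om" and bO: "b \<in> Om" and ab: "a \<noteq> b"
begin

abbreviation "sg \<equiv> move Bs a b"

lemma noK:
  assumes M: "{a,p,q,r} \<in> Bs" "distinct [a,p,q,r]" and bM: "b \<notin> {p,q,r}" and c: "col b p q"
  shows "col a b r"
proof -
  obtain s where s: "{b,p,q,s} \<in> Bs" "distinct [b,p,q,s]" using colE[of b p q] bM c M by auto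
  have sa: "s \<noteq> a"
  proof
    assume "s = a"
    then have "{b,p,q,s} = {a,p,q,r}" by (intro uniq[of _ _ a p q]) (use s M in auto)
    then show False using bM ab by blast
  qed
  have sr: "s \<noteq> r"
  proof
    assume "s = r"
    then have "{b,p,q,s} = {a,p,q,r}" by (intro uniq[of _ _ p q r]) (use s M in auto)
    then show False using bM ab by blast
  qed
  have "{b,s,a,r} \<in> Bs"
    by (rule trix[OF s(1) M(1), of p q b s a r]) (use s M sa sr bM ab in auto)
  then show ?thesis unfolding col_def by (intro bexI[of _ "{b,s,a,r}"]) auto
qed

lemma odd:
  assumes M: "{a,p,q,r} \<in> Bs" "distinct [a,p,q,r]" and bM: "b \<notin> {p,q,r}"
  shows "col a b p \<longleftrightarrow> (col a b q \<longleftrightarrow> col a b r)"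
proof -
  have O: "p \<in> Om" "q \<in> Om" "r \<in> Om" using in_Om[OF M(1)] by auto
  have d1: "distinct [a,b,p,q]" "distinct [a,b,p,r]" "distinct [a,b,q,r]"
    using M(2) bM ab by auto
  note P1 = parity[OF d1(1) aO bO O(1) O(2)]
  note P2 = parity[OF d1(2) aO bO O(1) O(3)]
  note P3 = parity[OF d1(3) aO bO O(2) O(3)]
  have C: "col a p q" "col a p r" "col a q r" unfolding col_def using M(1) by (intro bexI[OF _ M(1)]; blast)+
  have e2: "{a,p,r,q} \<in> Bs" and e3: "{a,q,r,p} \<in> Bs"
    using M(1) by (simp_all add: insert_commute)
  have d2: "distinct [a,p,r,q]" "distinct [a,q,r,p]" using M(2) by auto
  have b2: "b \<notin> {p,r,q}" "b \<notin> {q,r,p}" using bM by auto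
  note K1 = noK[OF M bM]
  note K2 = noK[OF e2 d2(1) b2(1)]
  note K3 = noK[OF e3 d2(2) b2(2)]
  show ?thesis using P1 P2 P3 C K1 K2 K3
    by (cases "col a b p"; cases "col a b q"; cases "col a b r"; cases "col b p q"; cases "col b p r"; cases "col b q r") simp_all
qed

lemma notinM:
  assumes M: "M \<in> Bs" "a \<in> M" "b \<notin> M" "t \<in> M" "t \<noteq> a" "col a b t"
  shows "sg t \<notin> M"
proof
  assume st: "sg t \<in> M"
  have N: "{a,b,t,sg t} \<in> Bs" "distinct [a,b,t,sg t]" using mv_col[of a b t] M ab by auto
  have "{a,b,t,sg t} = M" by (rule uniq[of _ _ a t "sg t"]) (use N M st in auto)
  then show False using M by blast
qed

lemma one_flip:
  assumes M: "{a,p,q,r} \<in> Bs" "distinct [a,p,q,r]" and bM: "b \<notin> {p,q,r}"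
    and c: "col a b p" "\<not> col a b q" "\<not> col a b r"
  shows "sg ` {a,p,q,r} \<in> Bs"
proof -
  have N: "{a,b,p,sg p} \<in> Bs" "distinct [a,b,p,sg p]" using mv_col[of a b p] M bM ab c by auto
  have n: "sg p \<notin> {a,p,q,r}" by (rule notinM) (use M bM c ab in auto)
  have "{b,sg p,q,r} \<in> Bs"
    by (rule trix[OF N(1) M(1), of a p b "sg p" q r]) (use N M n bM in auto)
  moreover have "sg ` {a,p,q,r} = {b,sg p,q,r}"
    using mv_a[of a b] mv_fix[of q a b] mv_fix[of r a b] M bM c by auto
  ultimately show ?thesis by simp
qed

lemma three_flip:
  assumes M: "{a,p,q,r} \<in> Bs" "distinct [a,p,q,r]" and bM: "b \<notin> {p,q,r}"
    and c: "col a b p" "col a b q" "col a b r"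
  shows "sg ` {a,p,q,r} \<in> Bs"
proof -
  have Np: "{a,b,p,sg p} \<in> Bs" "distinct [a,b,p,sg p]" using mv_col[of a b p] M bM ab c by auto
  have Nq: "{a,b,q,sg q} \<in> Bs" "distinct [a,b,q,sg q]" using mv_col[of a b q] M bM ab c by auto
  have Nr: "{a,b,r,sg r} \<in> Bs" "distinct [a,b,r,sg r]" using mv_col[of a b r] M bM ab c by auto
  have np: "sg p \<notin> {a,p,q,r}" by (rule notinM) (use M bM c ab in auto)
  have nq: "sg q \<notin> {a,p,q,r}" by (rule notinM) (use M bM c ab in auto)
  have nr: "sg r \<notin> {a,p,q,r}" by (rule notinM) (use M bM c ab in auto)
  have d: "distinct [sg p, sg q, sg r]" using dist_img[of "[p,q,r]" a b] M by auto
  have M1: "{b,sg p,q,r} \<in> Bs"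
    by (rule trix[OF Np(1) M(1), of a p b "sg p" q r]) (use Np M np bM in auto)
  have M2: "{a,sg q,sg p,r} \<in> Bs"
    by (rule trix[OF Nq(1) M1, of b q a "sg q" "sg p" r]) (use Np Nq M np nq bM d in auto)
  have M3: "{b,sg r,sg q,sg p} \<in> Bs"
    by (rule trix[OF Nr(1) M2, of a r b "sg r" "sg q" "sg p"]) (use Np Nq Nr M np nq nr bM d in auto)
  moreover have "sg ` {a,p,q,r} = {b,sg r,sg q,sg p}"
    using mv_a[of a b] by auto
  ultimately show ?thesis by simp
qed

lemma case1:
  assumes M: "{a,p,q,r} \<in> Bs" "distinct [a,p,q,r]" and bM: "b \<notin> {p,q,r}"
  shows "sg ` {a,p,q,r} \<in> Bs"
proof -
  have o: "col a b p \<longleftrightarrow> (col a b q \<longleftrightarrow> col a b r)" by (rule odd[OF M bM])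
  have e1: "{a,q,p,r} = {a,p,q,r}" and e2: "{a,r,p,q} = {a,p,q,r}" by blast+
  consider "col a b p" "\<not> col a b q" "\<not> col a b r" | "\<not> col a b p" "col a b q" "\<not> col a b r"
    | "\<not> col a b p" "\<not> col a b q" "col a b r" | "col a b p" "col a b q" "col a b r"
    using o by blast
  then show ?thesis
  proof cases
    case 1 then show ?thesis using one_flip[OF M bM] by blast
  next
    case 2 then show ?thesis using one_flip[of q p r] M bM e1 by auto
  next
    case 3 then show ?thesis using one_flip[of r p q] M bM e2 by auto
  next
    case 4 then show ?thesis using three_flip[OF M bM] by blast
  qed
qed

lemma case2:
  assumes M: "M \<in> Bs" "a \<in> M" "b \<in> M"
  shows "sg ` M \<in> Bs"
proof -
  have "card (M - {a,b}) = 2" using blk[OF M(1)] M ab by (simp add: card_Diff_subset)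
  then obtain c d where cd: "M - {a,b} = {c,d}" "c \<noteq> d" unfolding card_2_iff by blast
  have Me: "M = {a,b,c,d}" using cd M by blast
  have dd: "distinct [a,b,c,d]" using cd ab by auto
  have "sg c = d" using mv_line[of a b c d] M Me dd by simp
  moreover have "sg d = c"
  proof -
    have e: "{a,b,d,c} \<in> Bs" using M(1) Me by (simp add: insert_commute)
    have "distinct [a,b,d,c]" using dd by auto
    then show ?thesis using mv_line[OF e] by blast
  qed
  ultimately have "sg ` M = M" using Me mv_a[of a b] mv_b[of a b] by auto
  then show ?thesis using M by simp
qed

lemma img_a: "M \<in> Bs \<Longrightarrow> a \<in> M \<Longrightarrow> sg ` M \<in> Bs"
proof -
  assume M: "M \<in> Bs" "a \<in> M"
  show ?thesis
  proof (cases "b \<in> M")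
    case True then show ?thesis using case2 M by blast
  next
    case False
    have c4: "card M = 4" using blk M(1) by blast
    obtain p q r where Me: "M = {a,p,q,r}" and d: "distinct [a,p,q,r]" using card4[OF c4 M(2)] by blast
    have nb: "b \<notin> {p,q,r}" using False Me by blast
    have M1: "{a,p,q,r} \<in> Bs" using M(1) Me by simp
    show ?thesis unfolding Me by (rule case1[OF M1 d nb])
  qed
qed

lemma core0:
  assumes M: "{p,q,r,t} \<in> Bs" "distinct [p,q,r,t]" and aM: "a \<notin> {p,q,r,t}" and bM: "b \<notin> {p,q,r,t}"
    and c: "col a p q"
  shows "sg ` {p,q,r,t} \<in> Bs"
proof -
  obtain u where K: "{a,p,q,u} \<in> Bs" "distinct [a,p,q,u]" using colE[of a p q] aM M c by auto
  have ur: "u \<noteq> r"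
  proof
    assume "u = r"
    then have "{a,p,q,u} = {p,q,r,t}" by (intro uniq[of _ _ p q r]) (use K M in auto)
    then show False using aM by blast
  qed
  have ut: "u \<noteq> t"
  proof
    assume "u = t"
    then have "{a,p,q,u} = {p,q,r,t}" by (intro uniq[of _ _ p q t]) (use K M in auto)
    then show False using aM by blast
  qed
  have K': "{a,u,r,t} \<in> Bs"
    by (rule trix[OF K(1) M(1), of p q a u r t]) (use K M aM ur ut in auto)
  have I1: "sg ` {a,p,q,u} \<in> Bs" by (rule img_a[OF K(1)]) simp
  have I2: "sg ` {a,u,r,t} \<in> Bs" by (rule img_a[OF K']) simp
  have dd: "distinct [a,u,p,q,r,t]" using K M aM ur ut by auto
  have d: "distinct [b, sg u, sg p, sg q, sg r, sg t]"
    using dist_img[OF dd, of a b] mv_a[of a b] by simp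
  have "{sg p, sg q, sg r, sg t} \<in> Bs"
    by (rule trix[OF I1 I2, of b "sg u" "sg p" "sg q" "sg r" "sg t"]) (use d mv_a[of a b] in auto)
  then show ?thesis by simp
qed

lemma case0:
  assumes M: "M \<in> Bs" "a \<notin> M" "b \<notin> M"
  shows "sg ` M \<in> Bs"
proof -
  have c4: "card M = 4" using blk M(1) by blast
  then have "M \<noteq> {}" by auto
  then obtain p where pM: "p \<in> M" by blast
  obtain q r t where Me: "M = {p,q,r,t}" and dd: "distinct [p,q,r,t]" using card4[OF c4 pM] by blast
  have MO: "M \<subseteq> Om" using blk M(1) by blast
  have O: "p \<in> Om" "q \<in> Om" "r \<in> Om" using MO Me by auto
  have dist: "distinct [a,p,q,r]" using dd M(2) Me by auto
  note P = parity[OF dist aO O]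
  have M1: "{p,q,r,t} \<in> Bs" using M(1) Me by simp
  have "col p q r" unfolding col_def by (rule bexI[OF _ M1]) blast
  then consider "col a p q" | "col a p r" | "col a q r" using P by blast
  then show ?thesis
  proof cases
    case 1
    have aM': "a \<notin> {p,q,r,t}" "b \<notin> {p,q,r,t}" using M Me by auto
    show ?thesis unfolding Me by (rule core0[OF M1 dd aM' 1])
  next
    case 2
    have e: "{p,r,q,t} = M" using Me by blast
    have M2: "{p,r,q,t} \<in> Bs" using M(1) e by simp
    have d2: "distinct [p,r,q,t]" using dd by auto
    have aM': "a \<notin> {p,r,q,t}" "b \<notin> {p,r,q,t}" using M e by auto
    have "sg ` {p,r,q,t} \<in> Bs" by (rule core0[OF M2 d2 aM' 2])
    then show ?thesis using e by simp
  next
    case 3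
    have e: "{q,r,p,t} = M" using Me by blast
    have M2: "{q,r,p,t} \<in> Bs" using M(1) e by simp
    have d2: "distinct [q,r,p,t]" using dd by auto
    have aM': "a \<notin> {q,r,p,t}" "b \<notin> {q,r,p,t}" using M e by auto
    have "sg ` {q,r,p,t} \<in> Bs" by (rule core0[OF M2 d2 aM' 3])
    then show ?thesis using e by simp
  qed
qed

end

lemma img:
  assumes aO: "a \<in> Om" and bO: "b \<in> Om" and M: "M \<in> Bs"
  shows "move Bs a b ` M \<in> Bs"
proof (cases "a = b")
  case True then show ?thesis using M by (simp add: mv_id)
next
  case False
  show ?thesis
  proof (cases "a \<in> M")
    case True then show ?thesis by (rule img_a[OF aO bO False M])
  next
    case na: False
    show ?thesis
    proof (cases "b \<in> M")
      case True
      have "move Bs b a ` M \<in> Bs" using img_a[OF bO aO _ M True] False by simp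
      then show ?thesis by (simp add: mv_sym[of a b])
    next
      case False then show ?thesis using case0[OF aO bO \<open>a \<noteq> b\<close> M na] by simp
    qed
  qed
qed


lemma col_rot: "col x y z = col y z x"
proof -
  have "{x,y,z} = {y,z,x}" by blast
  then show ?thesis unfolding col_def by simp
qed

lemma mv_auto: "a \<in> Om \<Longrightarrow> b \<in> Om \<Longrightarrow> is_automorphism Om Bs (move Bs a b)"
  unfolding is_automorphism_def
proof (intro conjI mv_perm)
  assume aO: "a \<in> Om" and bO: "b \<in> Om"
  show "(\<lambda>B. move Bs a b ` B) ` Bs = Bs"
  proof (rule equalityI)
    show "(\<lambda>B. move Bs a b ` B) ` Bs \<subseteq> Bs" using img[OF aO bO] by blast
  next
    show "Bs \<subseteq> (\<lambda>B. move Bs a b ` B) ` Bs"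
    proof
      fix B assume B: "B \<in> Bs"
      have "B = move Bs a b ` (move Bs a b ` B)" by (simp add: image_image mv_inv)
      then show "B \<in> (\<lambda>B. move Bs a b ` B) ` Bs" using img[OF aO bO B] by blast
    qed
  qed
qed

lemma conj:
  assumes inv: "\<And>t. g (g t) = t" and gB: "\<And>B. B \<in> Bs \<Longrightarrow> g ` B \<in> Bs"
  shows "g (move Bs a b (g x)) = move Bs (g a) (g b) x"
proof (cases "a = b")
  case True then show ?thesis by (simp add: mv_id inv)
next
  case ab: False
  have ig: "inj_on g A" for A by (metis inj_onI inv)
  show ?thesis
  proof (cases "g x = a")
    case True then have "x = g a" using inv by metis
    then show ?thesis using True by (simp add: mv_a)
  next
    case na: False
    show ?thesis
    proof (cases "g x = b")
      case True then have "x = g b" using inv by metis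
      then show ?thesis using True by (simp add: mv_b)
    next
      case nb: False
      show ?thesis
      proof (cases "col a b (g x)")
        case True
        define d where "d = move Bs a b (g x)"
        have N: "{a,b,g x,d} \<in> Bs" "distinct [a,b,g x,d]"
          using mv_col[OF True] ab na nb unfolding d_def by auto
        have "g ` {a,b,g x,d} \<in> Bs" using gB N by blast
        then have N': "{g a, g b, x, g d} \<in> Bs" using inv by simp
        have gi: "g s = g t \<longleftrightarrow> s = t" for s t by (metis inv)
        have "distinct [g a, g b, g (g x), g d]" using N(2) by (simp add: gi)
        then have "distinct [g a, g b, x, g d]" using inv by simp
        then have "move Bs (g a) (g b) x = g d" using mv_line[OF N'] by blast
        then show ?thesis unfolding d_def by simp
      next
        case False
        have l: "g (move Bs a b (g x)) = x" using mv_fix[OF na nb False] inv by simp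
        have x1: "x \<noteq> g a" "x \<noteq> g b" using na nb inv by metis+
        have x2: "\<not> col (g a) (g b) x"
        proof
          assume "col (g a) (g b) x"
          then obtain B where B: "B \<in> Bs" "{g a, g b, x} \<subseteq> B" unfolding col_def by blast
          have i1: "a \<in> g ` B" using B(2) inv by (metis image_eqI insert_subset)
          have i2: "b \<in> g ` B" using B(2) inv by (metis image_eqI insert_subset)
          have i3: "g x \<in> g ` B" using B(2) by blast
          have "g ` B \<in> Bs" "{a, b, g x} \<subseteq> g ` B" using gB[OF B(1)] i1 i2 i3 by auto
          then show False using False unfolding col_def by blast
        qed
        show ?thesis using l mv_fix[OF x1 x2] by simp
      qed
    qed
  qed
qed

lemma conj_mv: "c \<in> Om \<Longrightarrow> d \<in> Om \<Longrightarrow>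
  move Bs c d (move Bs a b (move Bs c d t)) = move Bs (move Bs c d a) (move Bs c d b) t"
  by (rule conj) (use mv_inv img in auto)

lemma Q:
  assumes B: "{x,y,z,w} \<in> Bs" "distinct [x,y,z,w]" and t: "t \<notin> {x,y,z,w}" "col x y t"
  shows "col z w t \<and> move Bs z w t = move Bs x y t"
proof -
  define t' where "t' = move Bs x y t"
  have N: "{x,y,t,t'} \<in> Bs" "distinct [x,y,t,t']" using mv_col[OF t(2)] B t unfolding t'_def by auto
  have tz: "t' \<noteq> z"
  proof
    assume "t' = z"
    then have "{x,y,t,t'} = {x,y,z,w}" by (intro uniq[of _ _ x y z]) (use N B in auto)
    then show False using t N by blast
  qed
  have tw: "t' \<noteq> w"
  proof
    assume "t' = w"
    then have "{x,y,t,t'} = {x,y,z,w}" by (intro uniq[of _ _ x y w]) (use N B in auto)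
    then show False using t N by blast
  qed
  have L: "{z,w,t,t'} \<in> Bs" by (rule trix[OF B(1) N(1), of x y z w t t']) (use B N t tz tw in auto)
  have "col z w t" unfolding col_def by (rule bexI[OF _ L]) blast
  moreover have "move Bs z w t = t'" by (rule mv_line[OF L]) (use B N t tz tw in auto)
  ultimately show ?thesis unfolding t'_def by simp
qed

lemma same:
  assumes B: "{x,y,z,w} \<in> Bs" "distinct [x,y,z,w]"
  shows "move Bs x y = move Bs z w"
proof (rule ext)
  fix t
  have B2: "{z,w,x,y} \<in> Bs" using B(1) by (simp add: insert_commute)
  have d2: "distinct [z,w,x,y]" using B(2) by auto
  have B3: "{x,y,w,z} \<in> Bs" using B(1) by (simp add: insert_commute)
  have d3: "distinct [x,y,w,z]" using B(2) by auto
  have B4: "{z,w,y,x} \<in> Bs" using B(1) by (simp add: insert_commute)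
  have d4: "distinct [z,w,y,x]" using B(2) by auto
  show "move Bs x y t = move Bs z w t"
  proof (cases "t \<in> {x,y,z,w}")
    case True
    then consider "t = x" | "t = y" | "t = z" | "t = w" by blast
    then show ?thesis
    proof cases
      case 1 then show ?thesis using mv_line[OF B2 d2] by (simp add: mv_a)
    next
      case 2 then show ?thesis using mv_line[OF B4 d4] by (simp add: mv_b)
    next
      case 3 then show ?thesis using mv_line[OF B(1) B(2)] by (simp add: mv_a)
    next
      case 4 then show ?thesis using mv_line[OF B3 d3] by (simp add: mv_b)
    qed
  next
    case False
    show ?thesis
    proof (cases "col x y t")
      case True then show ?thesis using Q[OF B False True] by simp
    next
      case nc: False
      have nc2: "\<not> col z w t"
      proof
        assume "col z w t"
        then have "col x y t" using Q[OF B2 d2, of t] False by auto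
        then show False using nc by simp
      qed
      show ?thesis using mv_fix[of t x y] mv_fix[of t z w] nc nc2 False by auto
    qed
  qed
qed

lemma partA1:
  assumes O: "x \<in> Om" "y \<in> Om" "z \<in> Om" and d: "distinct [x,y,z]" and c: "col y z x"
  shows "perm_order (move Bs y z \<circ> move Bs x y) = 2"
proof -
  obtain w where N: "{y,z,x,w} \<in> Bs" "distinct [y,z,x,w]" using colE[OF c] d by auto
  have gx: "move Bs y z x = w" using mv_line[OF N] .
  have N2: "{x,y,z,w} \<in> Bs" using N(1) by (simp add: insert_commute)
  have d2: "distinct [x,y,z,w]" using N(2) by auto
  have sm: "move Bs x y = move Bs w z" using same[OF N2 d2] mv_sym by metis
  have comm: "move Bs y z (move Bs x y (move Bs y z t)) = move Bs x y t" for t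
    using conj_mv[OF O(2) O(3), of x y t] gx mv_a[of y z] sm by simp
  define f where "f = move Bs y z \<circ> move Bs x y"
  have f2: "f ^^ 2 = id"
  proof (rule ext)
    fix t
    have "(f ^^ 2) t = move Bs y z (move Bs x y (move Bs y z (move Bs x y t)))"
      by (simp add: f_def numeral_2_eq_2)
    also have "\<dots> = t" using comm[of "move Bs x y t"] mv_inv by simp
    finally show "(f ^^ 2) t = id t" by simp
  qed
  have f1: "f \<noteq> id"
  proof
    assume "f = id"
    then have "f x = x" by simp
    moreover have "f x = z" by (simp add: f_def mv_a)
    ultimately show False using d by simp
  qed
  have "(LEAST k. 0 < k \<and> f ^^ k = id) = 2"
  proof (rule Least_equality)
    show "0 < (2::nat) \<and> f ^^ 2 = id" using f2 by simp
  next
    fix k assume k: "0 < k \<and> f ^^ k = id"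
    show "2 \<le> k"
    proof (rule ccontr)
      assume "\<not> 2 \<le> k" then have "k = 1" using k by simp
      then show False using k f1 by simp
    qed
  qed
  then show ?thesis unfolding perm_order_def f_def .
qed

lemma braid:
  assumes O: "x \<in> Om" "y \<in> Om" "z \<in> Om" and d: "distinct [x,y,z]" and c: "\<not> col y z x"
  shows "move Bs x y (move Bs y z (move Bs x y t)) = move Bs x z t"
    and "move Bs y z (move Bs x y (move Bs y z t)) = move Bs x z t"
proof -
  have c2: "\<not> col x y z" using c col_rot by metis
  have hz: "move Bs x y z = z" by (rule mv_fix) (use d c2 in auto)
  have gx: "move Bs y z x = x" by (rule mv_fix) (use d c in auto)
  show "move Bs x y (move Bs y z (move Bs x y t)) = move Bs x z t"
    using conj_mv[OF O(1) O(2), of y z t] hz mv_b[of x y] by simp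
  show "move Bs y z (move Bs x y (move Bs y z t)) = move Bs x z t"
    using conj_mv[OF O(2) O(3), of x y t] gx mv_a[of y z] by simp
qed

lemma partA2:
  assumes O: "x \<in> Om" "y \<in> Om" "z \<in> Om" and d: "distinct [x,y,z]" and c: "\<not> col y z x"
  shows "perm_order (move Bs y z \<circ> move Bs x y) = 3"
proof -
  note B1 = braid(1)[OF O d c] and B2 = braid(2)[OF O d c]
  have c2: "\<not> col x y z" using c col_rot by metis
  have hz: "move Bs x y z = z" by (rule mv_fix) (use d c2 in auto)
  define f where "f = move Bs y z \<circ> move Bs x y"
  have f3: "f ^^ 3 = id"
  proof (rule ext)
    fix t
    have "(f ^^ 3) t = move Bs y z (move Bs x y (move Bs y z (move Bs x y (move Bs y z (move Bs x y t)))))"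
      by (simp add: f_def numeral_3_eq_3)
    also have "\<dots> = move Bs y z (move Bs x y (move Bs x y (move Bs y z (move Bs x y (move Bs x y t)))))"
      using B1[of "move Bs x y t"] B2[of "move Bs x y t"] by simp
    also have "\<dots> = t" by (simp add: mv_inv)
    finally show "(f ^^ 3) t = id t" by simp
  qed
  have fx: "f x = z" by (simp add: f_def mv_a)
  have fz: "f z = y" using hz by (simp add: f_def mv_b)
  have ffx: "f (f x) = y" by (simp add: fx fz)
  have "(LEAST k. 0 < k \<and> f ^^ k = id) = 3"
  proof (rule Least_equality)
    show "0 < (3::nat) \<and> f ^^ 3 = id" using f3 by simp
  next
    fix k assume k: "0 < k \<and> f ^^ k = id"
    show "3 \<le> k"
    proof (rule ccontr)
      assume "\<not> 3 \<le> k" then have "k = 1 \<or> k = 2" using k by auto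
      then show False
      proof
        assume "k = 1" then have "f = id" using k by simp
        then show False using fx d by simp
      next
        assume "k = 2" then have "f ^^ 2 = id" using k by simp
        then have "f (f x) = x" by (metis comp_apply funpow_0 funpow_Suc_right id_apply numeral_2_eq_2)
        then show False using ffx d by simp
      qed
    qed
  qed
  then show ?thesis unfolding perm_order_def f_def .
qed

lemma partB:
  assumes O: "x \<in> Om" "y \<in> Om" "z \<in> Om" and d: "distinct [x,y,z]" and c: "\<not> col y z x"
  shows "move_seq Bs [z, x, y, z] = move Bs x y"
proof (rule ext)
  fix t
  note B1 = braid(1)[OF O d c]
  have "move_seq Bs [z, x, y, z] t = move Bs y z (move Bs x y (move Bs z x t))" by simp
  also have "\<dots> = move Bs y z (move Bs x y (move Bs x y (move Bs y z (move Bs x y t))))"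
    using B1[of t] mv_sym[of z x] by simp
  also have "\<dots> = move Bs x y t" by (simp add: mv_inv)
  finally show "move_seq Bs [z, x, y, z] t = move Bs x y t" .
qed

lemma mv_in_Le:
  assumes O: "c \<in> Om" "d \<in> Om" "e \<in> Om"
  shows "\<exists>ys. set ys \<subseteq> Om \<and> move Bs c d = move_seq Bs (e # ys)"
proof (cases "c = d")
  case True then show ?thesis by (intro exI[of _ "[]"]) (simp add: mv_id)
next
  case cd: False
  show ?thesis
  proof (cases "e = c")
    case True then show ?thesis using O by (intro exI[of _ "[d]"]) simp
  next
    case ec: False
    show ?thesis
    proof (cases "e = d")
      case True then show ?thesis using O mv_sym[of c d] by (intro exI[of _ "[c]"]) simp
    next
      case ed: False
      have dd: "distinct [c,d,e]" using cd ec ed by auto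
      show ?thesis
      proof (cases "col d e c")
        case True
        obtain w where N: "{d,e,c,w} \<in> Bs" "distinct [d,e,c,w]" using colE[OF True] dd by auto
        have N2: "{c,d,e,w} \<in> Bs" using N(1) by (simp add: insert_commute)
        have d2: "distinct [c,d,e,w]" using N(2) by auto
        have "move Bs c d = move Bs e w" using same[OF N2 d2] .
        moreover have "w \<in> Om" using in_Om[OF N(1)] by simp
        ultimately show ?thesis by (intro exI[of _ "[w]"]) simp
      next
        case False
        show ?thesis using partB[OF O dd False] O by (intro exI[of _ "[c,d,e]"]) simp
      qed
    qed
  qed
qed

lemma L_in:
  "set (a # xs) \<subseteq> Om \<Longrightarrow> e \<in> Om \<Longrightarrow> \<exists>ys. set ys \<subseteq> Om \<and> move_seq Bs (a # xs) = move_seq Bs (e # ys)"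
proof (induction xs arbitrary: a e)
  case Nil then show ?case by (intro exI[of _ "[]"]) simp
next
  case (Cons b xs)
  have aO: "a \<in> Om" and sb: "set (b # xs) \<subseteq> Om" using Cons.prems(1) by simp_all
  have bO: "b \<in> Om" using sb by simp
  from mv_in_Le[OF aO bO Cons.prems(2)]
  obtain ys1 where y1: "set ys1 \<subseteq> Om" "move Bs a b = move_seq Bs (e # ys1)" by blast
  define k where "k = last (e # ys1)"
  have se: "set (e # ys1) \<subseteq> Om" using y1(1) Cons.prems(2) by simp
  have kO: "k \<in> Om" using se last_in_set[of "e # ys1"] unfolding k_def by blast
  from Cons.IH[OF sb kO]
  obtain ys2 where y2: "set ys2 \<subseteq> Om" "move_seq Bs (b # xs) = move_seq Bs (k # ys2)" by blast
  have "move_seq Bs (a # b # xs) = move_seq Bs (b # xs) \<circ> move Bs a b" by simp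
  also have "\<dots> = move_seq Bs (k # ys2) \<circ> move_seq Bs (e # ys1)" using y1(2) y2(2) by simp
  also have "\<dots> = move_seq Bs (e # ys1 @ ys2)" by (rule comp_in) (simp add: k_def)
  finally have eq: "move_seq Bs (a # b # xs) = move_seq Bs (e # ys1 @ ys2)" .
  have "set (ys1 @ ys2) \<subseteq> Om" using y1(1) y2(1) by simp
  then show ?case using eq by blast
qed


lemma aut_comp:
  assumes "is_automorphism Om Bs f" "is_automorphism Om Bs g"
  shows "is_automorphism Om Bs (f \<circ> g)"
proof -
  have pf: "f permutes Om" and imf: "(\<lambda>B. f ` B) ` Bs = Bs" using assms(1) unfolding is_automorphism_def by auto
  have pg: "g permutes Om" and img: "(\<lambda>B. g ` B) ` Bs = Bs" using assms(2) unfolding is_automorphism_def by auto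
  have p: "f \<circ> g permutes Om" by (rule permutes_compose[OF pg pf])
  have e: "(\<lambda>B. (f \<circ> g) ` B) = (\<lambda>B. f ` B) \<circ> (\<lambda>B. g ` B)" by (rule ext) (simp add: image_comp)
  have "(\<lambda>B. (f \<circ> g) ` B) ` Bs = (\<lambda>B. f ` B) ` ((\<lambda>B. g ` B) ` Bs)" unfolding e by (rule image_comp[symmetric])
  also have "\<dots> = Bs" using imf img by simp
  finally show ?thesis using p unfolding is_automorphism_def by simp
qed

lemma aut_id: "is_automorphism Om Bs id"
proof -
  have "id permutes Om" by (rule permutes_id)
  moreover have "(\<lambda>B. id ` B) ` Bs = Bs" by simp
  ultimately show ?thesis unfolding is_automorphism_def by blast
qed

lemma seq_aut: "set l \<subseteq> Om \<Longrightarrow> is_automorphism Om Bs (move_seq Bs l)"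
proof (induction l rule: induct_list012)
  case 1 then show ?case using aut_id by (simp add: id_def)
next
  case (2 x) then show ?case using aut_id by (simp add: id_def)
next
  case (3 x y zs)
  have "is_automorphism Om Bs (move_seq Bs (y # zs))" using 3 by simp
  moreover have "is_automorphism Om Bs (move Bs x y)" using mv_auto 3(3) by simp
  ultimately have "is_automorphism Om Bs (move_seq Bs (y # zs) \<circ> move Bs x y)" by (rule aut_comp)
  then show ?case by (simp only: move_seq.simps)
qed

lemma L_eq: "oo \<in> Om \<Longrightarrow> moves_L Om Bs = moves_L_at Om Bs oo"
proof
  assume oO: "oo \<in> Om"
  show "moves_L Om Bs \<subseteq> moves_L_at Om Bs oo"
  proof
    fix g assume "g \<in> moves_L Om Bs"
    then obtain a xs where g: "g = move_seq Bs (a # xs)" "a \<in> Om" "set xs \<subseteq> Om"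
      unfolding moves_L_def by blast
    have "set (a # xs) \<subseteq> Om" using g by simp
    from L_in[OF this oO] obtain ys where ys: "set ys \<subseteq> Om" "move_seq Bs (a # xs) = move_seq Bs (oo # ys)" by blast
    show "g \<in> moves_L_at Om Bs oo" unfolding moves_L_at_def
      by (rule CollectI, rule exI[of _ ys]) (simp add: ys g(1))
  qed
next
  assume oO: "oo \<in> Om"
  show "moves_L_at Om Bs oo \<subseteq> moves_L Om Bs"
  proof
    fix g assume "g \<in> moves_L_at Om Bs oo"
    then obtain xs where g: "g = move_seq Bs (oo # xs)" "set xs \<subseteq> Om" unfolding moves_L_at_def by blast
    show "g \<in> moves_L Om Bs" unfolding moves_L_def
      by (rule CollectI, rule exI[of _ oo], rule exI[of _ xs]) (simp add: g oO)
  qed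
qed

lemma group: "oo \<in> Om \<Longrightarrow> is_automorphism_group Om Bs (moves_L Om Bs)"
  unfolding is_automorphism_group_def
proof (intro conjI ballI)
  assume oO: "oo \<in> Om"
  fix g assume "g \<in> moves_L Om Bs"
  then obtain a xs where g: "g = move_seq Bs (a # xs)" "a \<in> Om" "set xs \<subseteq> Om"
    unfolding moves_L_def by blast
  show "is_automorphism Om Bs g" using seq_aut g by simp
next
  assume oO: "oo \<in> Om"
  show "id \<in> moves_L Om Bs" unfolding moves_L_def
    by (rule CollectI, rule exI[of _ oo], rule exI[of _ "[]"]) (simp add: oO)
next
  fix g h assume "g \<in> moves_L Om Bs" "h \<in> moves_L Om Bs"
  then obtain a xs c ys where g: "g = move_seq Bs (a # xs)" "a \<in> Om" "set xs \<subseteq> Om"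
    and h: "h = move_seq Bs (c # ys)" "c \<in> Om" "set ys \<subseteq> Om"
    unfolding moves_L_def by blast
  define k where "k = last (a # xs)"
  have kO: "k \<in> Om" using g last_in_set[of "a # xs"] unfolding k_def by auto
  have "set (c # ys) \<subseteq> Om" using h by simp
  from L_in[OF this kO] obtain zs where zs0: "set zs \<subseteq> Om" "move_seq Bs (c # ys) = move_seq Bs (k # zs)" by blast
  have zs: "set zs \<subseteq> Om" "h = move_seq Bs (k # zs)" using zs0 h by simp_all
  have "h \<circ> g = move_seq Bs (a # xs @ zs)" unfolding zs(2) g(1) by (rule comp_in) (simp add: k_def)
  moreover have "set (xs @ zs) \<subseteq> Om" using g zs by simp
  ultimately show "h \<circ> g \<in> moves_L Om Bs" unfolding moves_L_def
    by (intro CollectI exI[of _ a] exI[of _ "xs @ zs"]) (simp add: g(2))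
next
  fix g assume "g \<in> moves_L Om Bs"
  then obtain a xs where g: "g = move_seq Bs (a # xs)" "a \<in> Om" "set xs \<subseteq> Om"
    unfolding moves_L_def by blast
  have r1: "move_seq Bs (rev (a # xs)) \<circ> g = id" unfolding g(1) by (rule ms_rev_gen) (simp_all add: mv_inv mv_sym)
  have r2: "g \<circ> move_seq Bs (rev (a # xs)) = id"
    using ms_rev_gen[of Bs "rev (a # xs)"] g(1) by (simp add: mv_inv mv_sym)
  have "inv g = move_seq Bs (rev (a # xs))" by (rule inv_unique_comp[OF r2 r1])
  moreover obtain c cs where "rev (a # xs) = c # cs" by (cases "rev (a # xs)") auto
  moreover have "set (rev (a # xs)) \<subseteq> Om" using g by simp
  ultimately show "inv g \<in> moves_L Om Bs" unfolding moves_L_def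
    by (intro CollectI exI[of _ c] exI[of _ cs]) simp
qed

end

theorem lemma4p5:
  fixes Omega :: "'a set" and Bs :: "'a set set" and n lam :: nat and oo x y z :: 'a
  assumes "is_2design Omega Bs n 4 lam"
    and "supersimple Bs"
    and "prop_triangle Bs"
    and "regular_two_graph Omega (collinear_triples Omega Bs)"
    and "oo \<in> Omega"
    and "x \<in> Omega" "y \<in> Omega" "z \<in> Omega"
    and "x \<noteq> y" "y \<noteq> z" "x \<noteq> z"
  shows "(x \<in> line_closure Bs y z \<longrightarrow> perm_order (move Bs y z \<circ> move Bs x y) = 2)
       \<and> (x \<notin> line_closure Bs y z \<longrightarrow> perm_order (move Bs y z \<circ> move Bs x y) = 3)
       \<and> (x \<notin> line_closure Bs y z \<longrightarrow> move_seq Bs [z, x, y, z] = move Bs x y)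
       \<and> moves_L Omega Bs = moves_L_at Omega Bs oo
       \<and> is_automorphism_group Omega Bs (moves_L Omega Bs)"
proof -
  interpret SD Omega Bs
  proof
    fix B assume "B \<in> Bs"
    moreover have "\<forall>B\<in>Bs. B \<subseteq> Omega \<and> card B = 4" using assms(1) unfolding is_2design_def by (elim conjE)
    ultimately show "B \<subseteq> Omega \<and> card B = 4" by blast
  next
    show "supersimple Bs" by fact
  next
    show "prop_triangle Bs" by fact
  next
    fix F assume "F \<subseteq> Omega" "card F = 4"
    moreover have "\<forall>F. F \<subseteq> Omega \<and> card F = 4 \<longrightarrow> card {T \<in> collinear_triples Omega Bs. T \<subseteq> F} \<in> {0, 2, 4}"
      using assms(4) unfolding regular_two_graph_def by (elim conjE)
    ultimately show "card {T \<in> collinear_triples Omega Bs. T \<subseteq> F} \<in> {0, 2, 4}" by blast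
  qed
  have lc: "x \<in> line_closure Bs y z \<longleftrightarrow> col y z x" unfolding line_closure_def col_def by simp
  have d: "distinct [x,y,z]" using assms by simp
  note O = assms(6,7,8)
  have A1: "x \<in> line_closure Bs y z \<longrightarrow> perm_order (move Bs y z \<circ> move Bs x y) = 2"
    using partA1[OF O d] lc by blast
  have A2: "x \<notin> line_closure Bs y z \<longrightarrow> perm_order (move Bs y z \<circ> move Bs x y) = 3"
    using partA2[OF O d] lc by blast
  have A3: "x \<notin> line_closure Bs y z \<longrightarrow> move_seq Bs [z, x, y, z] = move Bs x y"
    using partB[OF O d] lc by blast
  show ?thesis using A1 A2 A3 L_eq[OF assms(5)] group[OF assms(5)] by (intro conjI)
qed

end
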